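(* Let $U\in C([0,1])\cap C^1((0,1])\cap C^2((0,1))$ satisfy $U''>0$ on $(0,1)$, $\lim_{h\downarrow0}U'(h)=-\infty$, $r\mapsto rU''(r)$ non-decreasing on $(0,1)$, and $U(0)=U(1)=0$. Let $D>0$ and $R\in(1/2,1)$ satisfy $U'(R)-U'(1-R)=D$. Then the function $r\mapsto Dr-U(r)-U(1-r)$ is strictly increasing on $[0,R]$, and for every $r\in(0,R]$, \[-U(r)-U(1-r)\le -rU'(r)+r\sup_{\rho\in(0,R]}\big(U'(1-\rho)+\rho U''(\rho)\big).\] *)

theory Defs
  imports "HOL-Analysis.Analysis"
begin

end

theory Submission
  imports Defs
begin

theorem lemma3p3:
  fixes U U' U'' :: "real \<Rightarrow> real" and D R :: real
  assumes U_cont: "continuous_on {0..1} U"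
    and U_deriv: "\<forall>x\<in>{0<..1}. (U has_real_derivative U' x) (at x within {0<..1})"
    and U'_cont: "continuous_on {0<..1} U'"
    and U'_deriv: "\<forall>x\<in>{0<..<1}. (U' has_real_derivative U'' x) (at x)"
    and U''_cont: "continuous_on {0<..<1} U''"
    and U''_pos: "\<forall>x\<in>{0<..<1}. U'' x > 0"
    and U'_lim: "filterlim U' at_bot (at_right 0)"
    and mono: "mono_on {0<..<1} (\<lambda>r. r * U'' r)"
    and U0: "U 0 = 0" and U1: "U 1 = 0"
    and D_pos: "D > 0"
    and R_gt: "1/2 < R" and R_lt: "R < 1"
    and R_eq: "U' R - U' (1 - R) = D"
  shows "strict_mono_on {0..R} (\<lambda>r. D * r - U r - U (1 - r))
         \<and> (\<forall>r\<in>{0<..R}. - U r - U (1 - r)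
               \<le> - r * U' r + r * (SUP \<rho>\<in>{0<..R}. U' (1 - \<rho>) + \<rho> * U'' \<rho>))"
proof -
  have Uat: "(U has_real_derivative U' x) (at x)" if "0 < x" "x < 1" for x
  proof -
    have "(U has_real_derivative U' x) (at x within {0<..<1})"
      using that by (intro DERIV_subset[OF bspec[OF U_deriv]]) auto
    moreover have "at x within {0<..<1} = at x" using that by (intro at_within_open) auto
    ultimately show ?thesis by simp
  qed
  have U'mono: "U' a < U' b" if "0 < a" "a < b" "b \<le> 1" for a b
  proof -
    have "continuous_on {a..b} U'" using that by (intro continuous_on_subset[OF U'_cont]) auto
    moreover have "U' differentiable at x" if "a < x" "x < b" for x
      using U'_deriv that \<open>0<a\<close> \<open>b\<le>1\<close> by (meson real_differentiable_def greaterThanLessThan_iff less_trans less_le_trans)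
    ultimately obtain l z where z: "a < z" "z < b" "(U' has_real_derivative l) (at z)"
       "U' b - U' a = (b - a) * l" using MVT[OF \<open>a<b\<close>] by blast
    have "l = U'' z" using z U'_deriv that by (meson DERIV_unique greaterThanLessThan_iff less_trans less_le_trans)
    moreover have "U'' z > 0" using U''_pos z that by auto
    ultimately have "(b - a) * l > 0" using z that by simp
    then show ?thesis using z by simp
  qed
  define f where "f = (\<lambda>r. D * r - U r - U (1 - r))"
  have part1: "strict_mono_on {0..R} f"
  proof (rule strict_mono_onI)
    fix a b assume ab: "a \<in> {0..R}" "b \<in> {0..R}" "a < b"
    have "continuous_on {a..b} f"
    proof -
      have c1: "continuous_on {a..b} U" using ab R_lt by (intro continuous_on_subset[OF U_cont]) auto
      have c2: "continuous_on {a..b} (\<lambda>r. U (1 - r))"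
        using ab R_lt by (intro continuous_on_compose2[OF U_cont, of _ "\<lambda>r. 1 - r", OF continuous_on_diff[OF continuous_on_const continuous_on_id]]) auto
      show ?thesis unfolding f_def by (intro continuous_intros c1 c2)
    qed
    moreover have fd: "(f has_real_derivative D - U' x + U' (1 - x)) (at x)" if "0 < x" "x < 1" for x
    proof -
      have d1: "((\<lambda>r. U (1 - r)) has_real_derivative U' (1 - x) * (-1)) (at x)"
        by (rule DERIV_chain2[OF Uat]) (use that in \<open>auto intro!: derivative_eq_intros\<close>)
      have d0: "((\<lambda>r. D * r) has_real_derivative D) (at x)"
        using DERIV_cmult[OF DERIV_ident, of D x] by simp
      have "((\<lambda>r. D * r - U r - U (1 - r)) has_real_derivative D - U' x - U' (1 - x) * (-1)) (at x)"
        by (intro DERIV_diff d0 d1 Uat that)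
      then show ?thesis unfolding f_def by simp
    qed
    ultimately have cont: "continuous_on {a..b} f" by simp
    have dif: "f differentiable (at x)" if "a < x" "x < b" for x
    proof -
      have "0 < x" "x < 1" using that ab R_lt by auto
      then show ?thesis using fd real_differentiable_def by blast
    qed
    obtain l z where z: "a < z" "z < b" "(f has_real_derivative l) (at z)"
       "f b - f a = (b - a) * l"
      using MVT[OF \<open>a<b\<close> cont dif] by blast
    have z01: "0 < z" "z < 1" using z ab R_lt by auto
    have "l = D - U' z + U' (1 - z)" using DERIV_unique[OF z(3) fd[OF z01]] by simp
    moreover have "U' z < U' R" using U'mono[of z R] z ab R_lt by auto
    moreover have "U' (1 - R) < U' (1 - z)" using U'mono[of "1-R" "1-z"] z ab R_lt by auto
    ultimately have "l > 0" using R_eq by simp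
    then have "(b - a) * l > 0" using z by simp
    then show "f a < f b" using z(4) by simp
  qed
  define S where "S = (SUP \<rho>\<in>{0<..R}. U' (1 - \<rho>) + \<rho> * U'' \<rho>)"
  have bdd: "bdd_above ((\<lambda>\<rho>. U' (1 - \<rho>) + \<rho> * U'' \<rho>) ` {0<..R})"
  proof (rule bdd_aboveI2)
    fix \<rho> assume r: "\<rho> \<in> {0<..R}"
    have "U' (1 - \<rho>) \<le> U' 1" using U'mono[of "1-\<rho>" 1] r R_lt by auto
    moreover have "\<rho> * U'' \<rho> \<le> R * U'' R" using mono_onD[OF mono, of \<rho> R] r R_lt R_gt by auto
    ultimately show "U' (1 - \<rho>) + \<rho> * U'' \<rho> \<le> U' 1 + R * U'' R" by simp
  qed
  have Sup: "U' (1 - \<rho>) + \<rho> * U'' \<rho> \<le> S" if "\<rho> \<in> {0<..R}" for \<rho>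
    unfolding S_def by (rule cSUP_upper[OF that bdd])
  have part2: "- U r - U (1 - r) \<le> - r * U' r + r * S" if r: "r \<in> {0<..R}" for r
  proof -
    define h where "h = (\<lambda>x. - U x - U (1 - x) + x * U' x)"
    have hd: "(h has_real_derivative U' (1 - x) + x * U'' x) (at x)" if "0 < x" "x < 1" for x
    proof -
      have d1: "((\<lambda>r. U (1 - r)) has_real_derivative U' (1 - x) * (-1)) (at x)"
        by (rule DERIV_chain2[OF Uat]) (use that in \<open>auto intro!: derivative_eq_intros\<close>)
      have dU': "(U' has_real_derivative U'' x) (at x)" using U'_deriv that by auto
      note d = DERIV_add[OF DERIV_diff[OF DERIV_minus[OF Uat[OF that]] d1] DERIV_mult[OF DERIV_ident dU']]
      show ?thesis unfolding h_def using d by (simp add: algebra_simps)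
    qed
    have key: "h r \<le> - U e - U (1 - e) + (r - e) * S" if e: "0 < e" "e < r" "U' e \<le> 0" for e
    proof -
      obtain z where z: "e < z" "z < r" "h r - h e = (r - e) * (U' (1 - z) + z * U'' z)"
        using MVT2[OF \<open>e<r\<close>, of h "\<lambda>x. U' (1 - x) + x * U'' x"] hd r R_lt e by force
      have "U' (1 - z) + z * U'' z \<le> S" using Sup[of z] z r e by auto
      then have "h r - h e \<le> (r - e) * S" using z e by (simp add: mult_left_mono)
      moreover have "e * U' e \<le> 0" using e by (simp add: mult_nonneg_nonpos)
      ultimately show ?thesis unfolding h_def by simp
    qed
    have ev: "\<forall>\<^sub>F e in at_right 0. h r \<le> - U e - U (1 - e) + (r - e) * S"
    proof -
      have "\<forall>\<^sub>F e in at_right 0. U' e \<le> 0" using U'_lim by (simp add: filterlim_at_bot)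
      moreover have "\<forall>\<^sub>F e in at_right (0::real). 0 < e \<and> e < r"
        using r by (simp add: eventually_at_right_field) (metis)
      ultimately show ?thesis by eventually_elim (use key in auto)
    qed
    have c1: "((\<lambda>e. U e) \<longlongrightarrow> U 0) (at_right 0)"
    proof -
      have "(U \<longlongrightarrow> U 0) (at 0 within {0..1})" using U_cont
        by (simp add: continuous_on_def)
      moreover have "at_right (0::real) = at 0 within {0..1}"
        by (rule at_within_nhd[of _ "{..<1}"]) auto
      ultimately show ?thesis by simp
    qed
    have c2: "((\<lambda>e. U (1 - e)) \<longlongrightarrow> U 1) (at_right 0)"
    proof -
      have "(U \<longlongrightarrow> U 1) (at 1 within {0..1})" using U_cont
        by (simp add: continuous_on_def)
      moreover have "at_left (1::real) = at 1 within {0..1}"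
        by (rule at_within_nhd[of _ "{0<..}"]) auto
      ultimately have "(U \<longlongrightarrow> U 1) (at_left 1)" by simp
      moreover have "filterlim (\<lambda>e. 1 - e) (at_left (1::real)) (at_right 0)"
        unfolding filterlim_at
      proof
        show "\<forall>\<^sub>F e in at_right 0. 1 - e \<in> {..<(1::real)} \<and> 1 - e \<noteq> 1"
          using eventually_at_right_less[of "0::real"] by eventually_elim auto
        have "((\<lambda>e. 1 - e) \<longlongrightarrow> 1 - 0) (at_right (0::real))" by (intro tendsto_intros)
        then show "((\<lambda>e. 1 - e) \<longlongrightarrow> (1::real)) (at_right 0)" by simp
      qed
      ultimately show ?thesis by (rule filterlim_compose)
    qed
    have lim: "((\<lambda>e. - U e - U (1 - e) + (r - e) * S) \<longlongrightarrow> - U 0 - U 1 + (r - 0) * S) (at_right 0)"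
      by (intro tendsto_intros c1 c2)
    have "h r \<le> - U 0 - U 1 + (r - 0) * S"
      by (rule tendsto_le[OF _ lim tendsto_const ev]) simp
    then show ?thesis unfolding h_def using U0 U1 by simp
  qed
  show ?thesis using part1 part2 unfolding f_def S_def by blast
qed

end
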